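(* For every pair of finite sets $W=\{w_1,\dots,w_n\}$, $F=\{f_1,\dots,f_m\}$ (with $n,m\ge 1$), every preference profile $\succcurlyeq$ and every ranking $\bm r$ of $W\cup F$, the matching matrix $\bm M_{\bm r}$ produced by serial dictatorship with ranking $\bm r$ on $\succcurlyeq$ satisfies $irv(\bm M_{\bm r},\succcurlyeq)\le 1/2$.
   Context: Let $\perp$ be the unmatched option; workers have linear-order preferences $\succcurlyeq_{w}$ on $F\cup\{\perp\}$, firms linear-order preferences $\succcurlyeq_f$ on $W\cup\{\perp\}$; $b\succ_a b'$ means $b\ne b'$ and $b\succcurlyeq_a b'$. A matching pairs agents one-to-one across the two sides, each agent being matched to one agent of the other side or unmatched. Its matching matrix $\bm M\in\{0,1\}^{(n+1)\times(m+1)}$ has, for $i\le n,j\le m$, $M_{ij}=1$ iff $w_i$ is matched to $f_j$, $M_{i,m+1}=1$ iff $w_i$ is unmatched, $M_{n+1,j}=1$ iff $f_j$ is unmatched, and $M_{n+1,m+1}=0$. Serial dictatorship with ranking $\bm r=(r_1,\dots,r_{n+m})$ (an ordering of $W\cup F$): for $k=1,\dots,n+m$, if $r_k$ is not yet matched, $r_k$ is assigned its most preferred option among $\perp$ and the not-yet-matched agents of the other side (and that agent, if any, becomes matched with $r_k$). For a profile $\succcurlyeq$ define, for $i\in[n],j\in[m]$, $p_{ij}=\frac1m\big(\mathbb I[f_j\succ_{w_i}\perp]+\sum_{j''=1}^m(\mathbb I[f_j\succ_{w_i}f_{j''}]-\mathbb I[\perp\succ_{w_i}f_{j''}])\big)$,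 $q_{ji}=\frac1n\big(\mathbb I[w_i\succ_{f_j}\perp]+\sum_{i''=1}^n(\mathbb I[w_i\succ_{f_j}w_{i''}]-\mathbb I[\perp\succ_{f_j}w_{i''}])\big)$, and the IR violation $irv(\bm M,\succcurlyeq)=\frac{1}{2n}\sum_{i=1}^n\sum_{j=1}^m M_{ij}\max\{-q_{ji},0\}+\frac{1}{2m}\sum_{i=1}^n\sum_{j=1}^m M_{ij}\max\{-p_{ij},0\}$. *)

theory Defs
  imports Complex_Main
begin

text \<open>Workers are w_1..w_n, represented by Inl i (1 <= i <= n); firms are f_1..f_m,
  represented by Inr j (1 <= j <= m). The option of a worker is a nat option:
  None is the unmatched option, Some j is firm f_j (similarly for firms).
  A preference of an agent is a relation R (as a set of pairs) with (a,b) in R meaning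
  "a is weakly preferred to b"; it is required to be a linear order on the options.\<close>

type_synonym agent = "nat + nat"
type_synonym pref = "(nat option \<times> nat option) set"

definition spref :: "pref \<Rightarrow> nat option \<Rightarrow> nat option \<Rightarrow> bool" where
  "spref R a b \<longleftrightarrow> a \<noteq> b \<and> (a, b) \<in> R"

definition best :: "pref \<Rightarrow> nat option set \<Rightarrow> nat option" where
  "best R S = (THE x. x \<in> S \<and> (\<forall>y\<in>S. (x, y) \<in> R))"

text \<open>State of serial dictatorship: None = not yet assigned; Some None = assigned the
  unmatched option; Some (Some a) = matched with agent a.\<close>
type_synonym sd_state = "agent \<Rightarrow> agent option option"

definition sd_step :: "nat \<Rightarrow> nat \<Rightarrow> (nat \<Rightarrow> pref) \<Rightarrow> (nat \<Rightarrow> pref)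
    \<Rightarrow> agent \<Rightarrow> sd_state \<Rightarrow> sd_state" where
  "sd_step n m Pw Pf a s =
    (if s a \<noteq> None then s else
     (case a of
        Inl i \<Rightarrow>
          (case best (Pw i) (insert None (Some ` {j \<in> {1..m}. s (Inr j) = None})) of
             None \<Rightarrow> s(a := Some None)
           | Some j \<Rightarrow> s(a := Some (Some (Inr j)), Inr j := Some (Some (Inl i))))
      | Inr j \<Rightarrow>
          (case best (Pf j) (insert None (Some ` {i \<in> {1..n}. s (Inl i) = None})) of
             None \<Rightarrow> s(a := Some None)
           | Some i \<Rightarrow> s(a := Some (Some (Inl i)), Inl i := Some (Some (Inr j))))))"

definition serial_dictatorship :: "nat \<Rightarrow> nat \<Rightarrow> (nat \<Rightarrow> pref) \<Rightarrow> (nat \<Rightarrow> pref)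
    \<Rightarrow> agent list \<Rightarrow> sd_state" where
  "serial_dictatorship n m Pw Pf r = fold (sd_step n m Pw Pf) r (\<lambda>_. None)"

text \<open>Matching matrix, indices 1..n+1 and 1..m+1.\<close>
definition matching_matrix :: "nat \<Rightarrow> nat \<Rightarrow> sd_state \<Rightarrow> nat \<Rightarrow> nat \<Rightarrow> real" where
  "matching_matrix n m s i j =
    (if 1 \<le> i \<and> i \<le> n \<and> 1 \<le> j \<and> j \<le> m then
       (if s (Inl i) = Some (Some (Inr j)) then 1 else 0)
     else if 1 \<le> i \<and> i \<le> n \<and> j = m + 1 then
       (if (\<exists>j'. s (Inl i) = Some (Some (Inr j'))) then 0 else 1)
     else if i = n + 1 \<and> 1 \<le> j \<and> j \<le> m then
       (if (\<exists>i'. s (Inr j) = Some (Some (Inl i'))) then 0 else 1)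
     else 0)"

definition ind :: "bool \<Rightarrow> real" where
  "ind b = (if b then 1 else 0)"

definition p_score :: "nat \<Rightarrow> (nat \<Rightarrow> pref) \<Rightarrow> nat \<Rightarrow> nat \<Rightarrow> real" where
  "p_score m Pw i j = (1 / real m) *
     (ind (spref (Pw i) (Some j) None) +
      (\<Sum>j''=1..m. ind (spref (Pw i) (Some j) (Some j'')) - ind (spref (Pw i) None (Some j''))))"

definition q_score :: "nat \<Rightarrow> (nat \<Rightarrow> pref) \<Rightarrow> nat \<Rightarrow> nat \<Rightarrow> real" where
  "q_score n Pf j i = (1 / real n) *
     (ind (spref (Pf j) (Some i) None) +
      (\<Sum>i''=1..n. ind (spref (Pf j) (Some i) (Some i'')) - ind (spref (Pf j) None (Some i''))))"

definition irv :: "nat \<Rightarrow> nat \<Rightarrow> (nat \<Rightarrow> nat \<Rightarrow> real) \<Rightarrow> (nat \<Rightarrow> pref) \<Rightarrow> (nat \<Rightarrow> pref) \<Rightarrow> real" where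
  "irv n m M Pw Pf =
     1 / (2 * real n) * (\<Sum>i=1..n. \<Sum>j=1..m. M i j * max (- q_score n Pf j i) 0)
   + 1 / (2 * real m) * (\<Sum>i=1..n. \<Sum>j=1..m. M i j * max (- p_score m Pw i j) 0)"

end

theory Submission
  imports Defs
begin

lemma best_prop:
  assumes lin: "linear_order_on A R" and fin: "finite S" and sub: "S \<subseteq> A" and ne: "S \<noteq> {}"
  shows "best R S \<in> S \<and> (\<forall>y\<in>S. (best R S, y) \<in> R)"
proof -
  have rf: "refl_on A R" and tr: "trans R" and an: "antisym R" and tot: "total_on A R"
    using lin unfolding linear_order_on_def partial_order_on_def preorder_on_def by auto
  have ex: "\<exists>x\<in>S. \<forall>y\<in>S. (x,y)\<in>R" using fin ne sub
  proof (induction S rule: finite_ne_induct)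
    case (singleton x)
    then show ?case using rf by (auto simp: refl_on_def)
  next
    case (insert x F)
    then obtain z where z: "z \<in> F" "\<forall>y\<in>F. (z,y)\<in>R" by auto
    have xA: "x \<in> A" and zA: "z \<in> A" using insert z by auto
    have xx: "(x,x) \<in> R" using rf xA by (auto simp: refl_on_def)
    show ?case
    proof (cases "(x,z) \<in> R")
      case True
      then have "\<forall>y\<in>F. (x,y)\<in>R" using z tr by (meson transD)
      then show ?thesis using xx by auto
    next
      case False
      then have "x \<noteq> z" using xx by auto
      then have "(z,x) \<in> R" using tot xA zA False by (auto simp: total_on_def)
      then show ?thesis using z by auto
    qed
  qed
  then obtain x where x: "x \<in> S" "\<forall>y\<in>S. (x,y)\<in>R" by auto
  have uniq: "x' = x" if h: "x' \<in> S \<and> (\<forall>y\<in>S. (x',y)\<in>R)" for x'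
  proof -
    have "(x',x)\<in>R" "(x,x')\<in>R" using x h by auto
    then show ?thesis using an unfolding antisym_def by blast
  qed
  have "(THE x. x \<in> S \<and> (\<forall>y\<in>S. (x, y) \<in> R)) = x"
    by (rule the_equality[OF _ uniq]) (use x in auto)
  then show ?thesis using x unfolding best_def by simp
qed

definition inv_sd :: "(nat \<Rightarrow> pref) \<Rightarrow> (nat \<Rightarrow> pref) \<Rightarrow> sd_state \<Rightarrow> bool" where
  "inv_sd Pw Pf s \<longleftrightarrow>
    (\<forall>i j. s (Inl i) = Some (Some (Inr j)) \<longleftrightarrow> s (Inr j) = Some (Some (Inl i))) \<and>
    (\<forall>i j. s (Inl i) = Some (Some (Inr j)) \<longrightarrow> spref (Pw i) (Some j) None \<or> spref (Pf j) (Some i) None)"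

lemma inv_upd_none:
  assumes inv: "inv_sd Pw Pf s" and sa: "s a = None"
  shows "inv_sd Pw Pf (s(a := Some None))"
proof -
  have A: "\<And>i j. s (Inl i) = Some (Some (Inr j)) \<longleftrightarrow> s (Inr j) = Some (Some (Inl i))"
   and C: "\<And>i j. s (Inl i) = Some (Some (Inr j)) \<Longrightarrow> spref (Pw i) (Some j) None \<or> spref (Pf j) (Some i) None"
    using inv unfolding inv_sd_def by blast+
  show ?thesis unfolding inv_sd_def
  proof (intro conjI allI)
    fix i j
    show "(s(a := Some None)) (Inl i) = Some (Some (Inr j)) \<longleftrightarrow> (s(a := Some None)) (Inr j) = Some (Some (Inl i))"
      using A[of i j] sa by (cases "a = Inl i"; cases "a = Inr j") auto
    show "(s(a := Some None)) (Inl i) = Some (Some (Inr j)) \<longrightarrow> spref (Pw i) (Some j) None \<or> spref (Pf j) (Some i) None"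
      using C[of i j] sa by (cases "a = Inl i") auto
  qed
qed

lemma inv_upd_pair:
  assumes inv: "inv_sd Pw Pf s" and si: "s (Inl i0) = None" and sj: "s (Inr j0) = None"
    and pr: "spref (Pw i0) (Some j0) None \<or> spref (Pf j0) (Some i0) None"
  shows "inv_sd Pw Pf (s(Inl i0 := Some (Some (Inr j0)), Inr j0 := Some (Some (Inl i0))))"
proof -
  have A: "\<And>i j. s (Inl i) = Some (Some (Inr j)) \<longleftrightarrow> s (Inr j) = Some (Some (Inl i))"
   and C: "\<And>i j. s (Inl i) = Some (Some (Inr j)) \<Longrightarrow> spref (Pw i) (Some j) None \<or> spref (Pf j) (Some i) None"
    using inv unfolding inv_sd_def by blast+
  show ?thesis unfolding inv_sd_def
  proof (intro conjI allI)
    fix i j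
    show "(s(Inl i0 := Some (Some (Inr j0)), Inr j0 := Some (Some (Inl i0)))) (Inl i) = Some (Some (Inr j)) \<longleftrightarrow> (s(Inl i0 := Some (Some (Inr j0)), Inr j0 := Some (Some (Inl i0)))) (Inr j) = Some (Some (Inl i))"
      using A[of i j] A[of i0 j] A[of i j0] si sj by (cases "i = i0"; cases "j = j0") auto
    show "(s(Inl i0 := Some (Some (Inr j0)), Inr j0 := Some (Some (Inl i0)))) (Inl i) = Some (Some (Inr j)) \<longrightarrow> spref (Pw i) (Some j) None \<or> spref (Pf j) (Some i) None"
      using C[of i j] pr by (cases "i = i0") auto
  qed
qed

lemma inv_step:
  assumes inv: "inv_sd Pw Pf s"
    and a: "a \<in> Inl ` {1..n} \<union> Inr ` {1..m}"
    and lw: "\<forall>i\<in>{1..n}. linear_order_on (insert None (Some ` {1..m})) (Pw i)"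
    and lf: "\<forall>j\<in>{1..m}. linear_order_on (insert None (Some ` {1..n})) (Pf j)"
  shows "inv_sd Pw Pf (sd_step n m Pw Pf a s)"
proof (cases "s a = None")
  case False
  then show ?thesis using inv by (simp add: sd_step_def)
next
  case sa: True
  show ?thesis
  proof (cases a)
    case (Inl i)
    have i: "i \<in> {1..n}" using a Inl by auto
    define S where "S = insert None (Some ` {j \<in> {1..m}. s (Inr j) = None})"
    have "best (Pw i) S \<in> S \<and> (\<forall>y\<in>S. (best (Pw i) S, y) \<in> Pw i)"
      by (rule best_prop[OF lw[rule_format, OF i]]) (auto simp: S_def)
    then have b: "best (Pw i) S \<in> S" "(best (Pw i) S, None) \<in> Pw i" by (auto simp: S_def)
    show ?thesis
    proof (cases "best (Pw i) S")
      case None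
      have "sd_step n m Pw Pf a s = s(a := Some None)"
        using sa Inl None unfolding sd_step_def S_def[symmetric] by simp
      then show ?thesis using inv_upd_none[OF inv sa] by simp
    next
      case (Some j)
      have j: "s (Inr j) = None" using b Some by (auto simp: S_def)
      have pr: "spref (Pw i) (Some j) None" using b Some by (simp add: spref_def)
      have "sd_step n m Pw Pf a s = s(Inl i := Some (Some (Inr j)), Inr j := Some (Some (Inl i)))"
        using sa Inl Some unfolding sd_step_def S_def[symmetric] by simp
      then show ?thesis using inv_upd_pair[OF inv _ j] sa Inl pr by simp
    qed
  next
    case (Inr j)
    have j: "j \<in> {1..m}" using a Inr by auto
    define S where "S = insert None (Some ` {i \<in> {1..n}. s (Inl i) = None})"
    have "best (Pf j) S \<in> S \<and> (\<forall>y\<in>S. (best (Pf j) S, y) \<in> Pf j)"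
      by (rule best_prop[OF lf[rule_format, OF j]]) (auto simp: S_def)
    then have b: "best (Pf j) S \<in> S" "(best (Pf j) S, None) \<in> Pf j" by (auto simp: S_def)
    show ?thesis
    proof (cases "best (Pf j) S")
      case None
      have "sd_step n m Pw Pf a s = s(a := Some None)"
        using sa Inr None unfolding sd_step_def S_def[symmetric] by simp
      then show ?thesis using inv_upd_none[OF inv sa] by simp
    next
      case (Some i)
      have i: "s (Inl i) = None" using b Some by (auto simp: S_def)
      have pr: "spref (Pf j) (Some i) None" using b Some by (simp add: spref_def)
      have "sd_step n m Pw Pf a s = s(Inr j := Some (Some (Inl i)), Inl i := Some (Some (Inr j)))"
        using sa Inr Some unfolding sd_step_def S_def[symmetric] by simp
      also have "\<dots> = s(Inl i := Some (Some (Inr j)), Inr j := Some (Some (Inl i)))"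
        by (simp add: fun_upd_twist)
      finally show ?thesis using inv_upd_pair[OF inv i] sa Inr pr by simp
    qed
  qed
qed

lemma inv_fold:
  assumes "\<forall>a\<in>set r. a \<in> Inl ` {1..n} \<union> Inr ` {1..m}"
    and lw: "\<forall>i\<in>{1..n}. linear_order_on (insert None (Some ` {1..m})) (Pw i)"
    and lf: "\<forall>j\<in>{1..m}. linear_order_on (insert None (Some ` {1..n})) (Pf j)"
    and "inv_sd Pw Pf s"
  shows "inv_sd Pw Pf (fold (sd_step n m Pw Pf) r s)"
  using assms(1,4)
proof (induction r arbitrary: s)
  case Nil
  then show ?case by simp
next
  case (Cons a r)
  have "inv_sd Pw Pf (sd_step n m Pw Pf a s)"
    using inv_step[OF Cons.prems(2) _ lw lf] Cons.prems(1) by auto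
  then show ?case using Cons by simp
qed

lemma p_nonneg:
  assumes lin: "linear_order_on A R" and pr: "spref R (Some j) None"
  shows "p_score m (\<lambda>_. R) i j \<ge> 0"
proof -
  have tr: "trans R" and an: "antisym R"
    using lin unfolding linear_order_on_def partial_order_on_def preorder_on_def by auto
  have "\<And>k. ind (spref R (Some j) (Some k)) - ind (spref R None (Some k)) \<ge> 0"
  proof -
    fix k
    show "ind (spref R (Some j) (Some k)) - ind (spref R None (Some k)) \<ge> 0"
    proof (cases "spref R None (Some k)")
      case True
      have "(Some j, Some k) \<in> R" using True pr tr unfolding spref_def by (meson transD)
      moreover have "Some j \<noteq> Some k" using True pr an unfolding spref_def antisym_def by blast
      ultimately show ?thesis by (simp add: spref_def ind_def)
    qed (simp add: ind_def)
  qed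
  then have "(\<Sum>k=1..m. ind (spref R (Some j) (Some k)) - ind (spref R None (Some k))) \<ge> 0"
    by (intro sum_nonneg) auto
  moreover have "ind (spref R (Some j) None) \<ge> 0" by (simp add: ind_def)
  ultimately show ?thesis unfolding p_score_def by simp
qed

lemma q_nonneg:
  assumes lin: "linear_order_on A R" and pr: "spref R (Some i) None"
  shows "q_score n (\<lambda>_. R) j i \<ge> 0"
  using p_nonneg[OF lin pr, of n j] unfolding p_score_def q_score_def by simp

lemma p_lower:
  assumes "m \<ge> 1"
  shows "p_score m Pw i j \<ge> -1"
proof -
  have "(\<Sum>k=1..m. ind (spref (Pw i) (Some j) (Some k)) - ind (spref (Pw i) None (Some k)))
      \<ge> (\<Sum>k=1..m. (-1::real))"
    by (intro sum_mono) (simp add: ind_def)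
  moreover have "ind (spref (Pw i) (Some j) None) \<ge> 0" by (simp add: ind_def)
  ultimately have "ind (spref (Pw i) (Some j) None) +
      (\<Sum>k=1..m. ind (spref (Pw i) (Some j) (Some k)) - ind (spref (Pw i) None (Some k))) \<ge> - real m"
    by simp
  then show ?thesis using assms unfolding p_score_def
    by (simp add: field_simps)
qed

lemma q_lower:
  assumes "n \<ge> 1"
  shows "q_score n Pf j i \<ge> -1"
  using p_lower[OF assms, of Pf j i] unfolding p_score_def q_score_def by simp

theorem proposition2:
  fixes n m :: nat and Pw Pf :: "nat \<Rightarrow> pref" and r :: "agent list"
  assumes "n \<ge> 1" and "m \<ge> 1"
    and "\<forall>i\<in>{1..n}. linear_order_on (insert None (Some ` {1..m})) (Pw i)"
    and "\<forall>j\<in>{1..m}. linear_order_on (insert None (Some ` {1..n})) (Pf j)"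
    and "distinct r" and "set r = Inl ` {1..n} \<union> Inr ` {1..m}"
  shows "irv n m (matching_matrix n m (serial_dictatorship n m Pw Pf r)) Pw Pf \<le> 1 / 2"
proof -
  define s where "s = serial_dictatorship n m Pw Pf r"
  define M where "M = matching_matrix n m s"
  define c where "c = 1 / (2 * real (min n m))"
  have inv: "inv_sd Pw Pf s" unfolding s_def serial_dictatorship_def
    by (rule inv_fold) (use assms in \<open>auto simp: inv_sd_def\<close>)
  have A: "\<And>i j. s (Inl i) = Some (Some (Inr j)) \<longleftrightarrow> s (Inr j) = Some (Some (Inl i))"
   and C: "\<And>i j. s (Inl i) = Some (Some (Inr j)) \<Longrightarrow> spref (Pw i) (Some j) None \<or> spref (Pf j) (Some i) None"
    using inv unfolding inv_sd_def by blast+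
  have Mv: "M i j = (if s (Inl i) = Some (Some (Inr j)) then 1 else 0)"
    if "i \<in> {1..n}" "j \<in> {1..m}" for i j
    using that unfolding M_def matching_matrix_def by auto
  have pt: "M i j * max (- q_score n Pf j i) 0 / (2 * real n) + M i j * max (- p_score m Pw i j) 0 / (2 * real m)
      \<le> M i j * c" if i: "i \<in> {1..n}" and j: "j \<in> {1..m}" for i j
  proof (cases "s (Inl i) = Some (Some (Inr j))")
    case False
    then show ?thesis using Mv[OF i j] by simp
  next
    case True
    have M1: "M i j = 1" using Mv[OF i j] True by simp
    have cn: "1 / (2 * real n) \<le> c" and cm: "1 / (2 * real m) \<le> c"
      unfolding c_def using assms(1,2) by (auto simp: frac_le min_def)
    have q1: "max (- q_score n Pf j i) 0 \<le> 1" using q_lower[OF assms(1), of Pf j i] by simp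
    have p1: "max (- p_score m Pw i j) 0 \<le> 1" using p_lower[OF assms(2), of Pw i j] by simp
    have qn: "0 \<le> max (- q_score n Pf j i) 0" and pn: "0 \<le> max (- p_score m Pw i j) 0" by auto
    from C[OF True] show ?thesis
    proof
      assume "spref (Pw i) (Some j) None"
      then have "p_score m (\<lambda>_. Pw i) i j \<ge> 0"
        using p_nonneg assms(3) i by blast
      then have "max (- p_score m Pw i j) 0 = 0" unfolding p_score_def by simp
      moreover have "max (- q_score n Pf j i) 0 / (2 * real n) \<le> 1 / (2 * real n)"
        using q1 assms(1) by (simp add: divide_right_mono)
      ultimately show ?thesis using M1 cn by simp
    next
      assume "spref (Pf j) (Some i) None"
      then have "q_score n (\<lambda>_. Pf j) j i \<ge> 0"
        using q_nonneg assms(4) j by blast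
      then have "max (- q_score n Pf j i) 0 = 0" unfolding q_score_def by simp
      moreover have "max (- p_score m Pw i j) 0 / (2 * real m) \<le> 1 / (2 * real m)"
        using p1 assms(2) by (simp add: divide_right_mono)
      ultimately show ?thesis using M1 cm by simp
    qed
  qed
  have row: "(\<Sum>j=1..m. M i j) \<le> 1" if i: "i \<in> {1..n}" for i
  proof (cases "\<exists>j0. s (Inl i) = Some (Some (Inr j0))")
    case True
    then obtain j0 where j0: "s (Inl i) = Some (Some (Inr j0))" by blast
    have "(\<Sum>j=1..m. M i j) = (\<Sum>j=1..m. if j = j0 then 1 else 0)"
      by (rule sum.cong) (use Mv[OF i] j0 in auto)
    also have "\<dots> \<le> 1" by (simp add: sum.delta)
    finally show ?thesis .
  next
    case False
    have "(\<Sum>j=1..m. M i j) = (\<Sum>j=1..m. 0::real)"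
      by (rule sum.cong) (use Mv[OF i] False in auto)
    then show ?thesis by simp
  qed
  have col: "(\<Sum>i=1..n. M i j) \<le> 1" if j: "j \<in> {1..m}" for j
  proof (cases "\<exists>i0. s (Inr j) = Some (Some (Inl i0))")
    case True
    then obtain i0 where i0: "s (Inr j) = Some (Some (Inl i0))" by blast
    have "(\<Sum>i=1..n. M i j) = (\<Sum>i=1..n. if i = i0 then 1 else 0)"
      by (rule sum.cong) (use Mv j i0 A in auto)
    also have "\<dots> \<le> 1" by (simp add: sum.delta)
    finally show ?thesis .
  next
    case False
    have "(\<Sum>i=1..n. M i j) = (\<Sum>i=1..n. 0::real)"
      by (rule sum.cong) (use Mv j False A in auto)
    then show ?thesis by simp
  qed
  have K1: "(\<Sum>i=1..n. \<Sum>j=1..m. M i j) \<le> real n"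
  proof -
    have "(\<Sum>i=1..n. \<Sum>j=1..m. M i j) \<le> (\<Sum>i=1..n. 1)" by (rule sum_mono) (use row in auto)
    then show ?thesis by simp
  qed
  have K2: "(\<Sum>i=1..n. \<Sum>j=1..m. M i j) \<le> real m"
  proof -
    have "(\<Sum>i=1..n. \<Sum>j=1..m. M i j) = (\<Sum>j=1..m. \<Sum>i=1..n. M i j)" by (rule sum.swap)
    also have "\<dots> \<le> (\<Sum>j=1..m. 1)" by (rule sum_mono) (use col in auto)
    finally show ?thesis by simp
  qed
  have K: "(\<Sum>i=1..n. \<Sum>j=1..m. M i j) \<le> real (min n m)"
    using K1 K2 by (simp add: min_def)
  have "irv n m M Pw Pf = (\<Sum>i=1..n. \<Sum>j=1..m.
      M i j * max (- q_score n Pf j i) 0 / (2 * real n) + M i j * max (- p_score m Pw i j) 0 / (2 * real m))"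
    unfolding irv_def by (simp add: sum_distrib_left sum.distrib)
  also have "\<dots> \<le> (\<Sum>i=1..n. \<Sum>j=1..m. M i j * c)"
    by (intro sum_mono) (use pt in auto)
  also have "\<dots> = (\<Sum>i=1..n. \<Sum>j=1..m. M i j) * c" by (simp add: sum_distrib_right)
  also have "\<dots> \<le> real (min n m) * c"
    by (rule mult_right_mono[OF K]) (simp add: c_def)
  also have "\<dots> = 1 / 2" unfolding c_def using assms(1,2) by simp
  finally show ?thesis unfolding M_def s_def .
qed

end
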